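(* Let $d\ge0$, $s,m\ge1$, and let $\mathbf{M}_0\in\mathbb{Z}^{s\times m}$ be an integer matrix such that $\bm{u}\mapsto\mathbf{M}_0\bm{u}$ is injective on $\{0,1\}^m$. Let $\mathbf{P}=\mathbf{H}_{2^d}\otimes\mathbf{M}_0$ and let $\mathbf{Q}^1,\mathbf{Q}^2$ be real matrices with $\mathbf{Q}^1-\mathbf{Q}^2=\mathbf{P}$, and $\mathbf{Q}=\begin{bmatrix}\mathbf{Q}^1\\ \mathbf{Q}^2\end{bmatrix}$. Let $\bm{x}=(\bm{x}_1,\dots,\bm{x}_{2^d})\in\{0,1\}^{2^dm}$ (blocks $\bm{x}_i\in\{0,1\}^m$), $\bm{n}'\in\mathbb{R}^{2^{d+1}s}$ and $\bm{y}'=\mathbf{Q}\bm{x}+\bm{n}'$. Consider the decoder: (1) compute $\bm{y}=\bm{y}'_u-\bm{y}'_l$ (upper half minus lower half of $\bm{y}'$); (2) compute $T_d(\bm{y})$ and split it into consecutive blocks $\bm{w}_1,\dots,\bm{w}_{2^d}\in\mathbb{R}^s$; (3) round each entry of each $\bm{w}_i$ to a nearest integer, obtaining $\tilde{\bm{w}}_i$; if $\tilde{\bm{w}}_i=\mathbf{M}_0\bm{u}$ for some (necessarily unique) $\bm{u}\in\{0,1\}^m$ output $\hat{\bm{x}}_i=\bm{u}$, otherwise output an arbitrary $\hat{\bm{x}}_i\in\{0,1\}^m$. Then the number of indices $i$ with $\hat{\bm{x}}_i\neq\bm{x}_i$ is at most $4\cdot 2^{-d}\lVert\bm{y}-\mathbf{P}\bm{x}\rVert_2^2\le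 8\cdot2^{-d}\lVert\bm{n}'\rVert_2^2$; in particular $\hat{\bm{x}}=(\hat{\bm{x}}_1,\dots,\hat{\bm{x}}_{2^d})$ differs from $\bm{x}$ in at most $8m\,2^{-d}\lVert\bm{n}'\rVert_2^2$ coordinates.
   Context: $\mathbf{H}_{2^d}$ is the Sylvester-type Hadamard matrix: $\mathbf{H}_1=[1]$, $\mathbf{H}_{2k}=\begin{bmatrix}\mathbf{H}_k&\mathbf{H}_k\\ \mathbf{H}_k&-\mathbf{H}_k\end{bmatrix}$; $\otimes$ is the Kronecker product. The map $T_d:\mathbb{R}^{2^ds}\to\mathbb{R}^{2^ds}$ is defined recursively by $T_0(\bm{v})=\bm{v}$ and, for $d\ge1$, with $\bm{v}=(\bm{v}_u,\bm{v}_l)$ split into upper and lower halves, $T_d(\bm{v})=\big(T_{d-1}(\tfrac{\bm{v}_u+\bm{v}_l}{2}),T_{d-1}(\tfrac{\bm{v}_u-\bm{v}_l}{2})\big)$. *)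

theory Defs
  imports Complex_Main
begin

(* Vectors are functions nat => real (index i < length), matrices nat => nat => _ . *)

fun hadamard :: "nat \<Rightarrow> nat \<Rightarrow> nat \<Rightarrow> int" where
  "hadamard 0 i j = 1"
| "hadamard (Suc d) i j =
     (if i < 2^d then (if j < 2^d then hadamard d i j else hadamard d i (j - 2^d))
      else (if j < 2^d then hadamard d (i - 2^d) j else - hadamard d (i - 2^d) (j - 2^d)))"

definition kron_hadamard :: "nat \<Rightarrow> nat \<Rightarrow> nat \<Rightarrow> (nat \<Rightarrow> nat \<Rightarrow> int) \<Rightarrow> nat \<Rightarrow> nat \<Rightarrow> int" where
  "kron_hadamard d s m M0 i j = hadamard d (i div s) (j div m) * M0 (i mod s) (j mod m)"

definition mat_vec :: "(nat \<Rightarrow> nat \<Rightarrow> real) \<Rightarrow> nat \<Rightarrow> (nat \<Rightarrow> real) \<Rightarrow> nat \<Rightarrow> real" where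
  "mat_vec A n x i = (\<Sum>j<n. A i j * x j)"

fun T_map :: "nat \<Rightarrow> nat \<Rightarrow> (nat \<Rightarrow> real) \<Rightarrow> nat \<Rightarrow> real" where
  "T_map s 0 v = v"
| "T_map s (Suc d) v = (\<lambda>i. if i < 2^d * s
       then T_map s d (\<lambda>j. (v j + v (j + 2^d * s)) / 2) i
       else T_map s d (\<lambda>j. (v j - v (j + 2^d * s)) / 2) (i - 2^d * s))"

definition binary_vec :: "nat \<Rightarrow> (nat \<Rightarrow> real) \<Rightarrow> bool" where
  "binary_vec n u \<longleftrightarrow> (\<forall>k<n. u k = 0 \<or> u k = 1)"

definition int_mat_vec :: "(nat \<Rightarrow> nat \<Rightarrow> int) \<Rightarrow> nat \<Rightarrow> (nat \<Rightarrow> real) \<Rightarrow> nat \<Rightarrow> real" where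
  "int_mat_vec M0 m u r = (\<Sum>k<m. of_int (M0 r k) * u k)"

definition inj_on_binary :: "nat \<Rightarrow> nat \<Rightarrow> (nat \<Rightarrow> nat \<Rightarrow> int) \<Rightarrow> bool" where
  "inj_on_binary s m M0 \<longleftrightarrow>
     (\<forall>u v. binary_vec m u \<longrightarrow> binary_vec m v \<longrightarrow>
        (\<forall>r<s. int_mat_vec M0 m u r = int_mat_vec M0 m v r) \<longrightarrow> (\<forall>k<m. u k = v k))"

definition sqnorm :: "nat \<Rightarrow> (nat \<Rightarrow> real) \<Rightarrow> real" where
  "sqnorm n v = (\<Sum>i<n. (v i)^2)"

end

theory Submission
  imports Defs
begin


lemma sum_split_add: fixes N M :: nat and f :: "nat \<Rightarrow> 'a::comm_monoid_add" shows "(\<Sum>i<N+M. f i) = (\<Sum>i<N. f i) + (\<Sum>i<M. f (i+N))"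
  by (induction M) (simp_all add: add_ac)

lemma sum_split2: fixes N :: nat and f :: "nat \<Rightarrow> 'a::comm_monoid_add" shows "(\<Sum>i<2*N. f i) = (\<Sum>i<N. f i) + (\<Sum>i<N. f (i+N))"
  using sum_split_add[where N=N and M=N and f=f] by (simp add: mult_2)

lemma sum_group: fixes n m :: nat and f :: "nat \<Rightarrow> 'a::comm_monoid_add" shows "(\<Sum>j<n*m. f j) = (\<Sum>b<n. \<Sum>k<m. f (b*m+k))"
proof (induction n)
  case (Suc n)
  have "(\<Sum>j<Suc n*m. f j) = (\<Sum>j<n*m + m. f j)" by (simp add: add.commute)
  also have "\<dots> = (\<Sum>j<n*m. f j) + (\<Sum>k<m. f (k + n*m))" by (rule sum_split_add)
  finally show ?case using Suc by (simp add: add.commute)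
qed simp

lemma T_cong: "(\<forall>j<2^d*s. u j = v j) \<Longrightarrow> i < 2^d*s \<Longrightarrow> T_map s d u i = T_map s d v i"
proof (induction d arbitrary: u v i)
  case 0 then show ?case by simp
next
  case (Suc d)
  let ?N = "2^d*s"
  have NN: "2^Suc d*s = ?N + ?N" by simp
  have H: "u j = v j" "u (j+?N) = v (j+?N)" if "j < ?N" for j
  proof -
    have "j < 2^Suc d*s" "j+?N < 2^Suc d*s" unfolding NN using that by linarith+
    thus "u j = v j" "u (j+?N) = v (j+?N)" using Suc.prems(1) by blast+
  qed
  show ?case
  proof (cases "i < ?N")
    case True
    have "\<forall>j<?N. (u j + u (j + ?N))/2 = (v j + v (j + ?N))/2" using H by simp
    then have "T_map s d (\<lambda>j. (u j + u (j + ?N))/2) i = T_map s d (\<lambda>j. (v j + v (j + ?N))/2) i"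
      by (rule Suc.IH[OF _ True])
    with True show ?thesis using H by simp
  next
    case False
    have "\<forall>j<?N. (u j - u (j + ?N))/2 = (v j - v (j + ?N))/2" using H by simp
    moreover have "i - ?N < ?N" using False Suc.prems(2) unfolding NN by linarith
    ultimately have "T_map s d (\<lambda>j. (u j - u (j + ?N))/2) (i - ?N) = T_map s d (\<lambda>j. (v j - v (j + ?N))/2) (i - ?N)"
      by (rule Suc.IH)
    with False show ?thesis by simp
  qed
qed

lemma T_add: "T_map s d (\<lambda>i. u i + v i) i = T_map s d u i + T_map s d v i"
proof (induction d arbitrary: u v i)
  case 0 then show ?case by simp
next
  case (Suc d)
  let ?N = "2^d*s"
  have e1: "(\<lambda>j. (u j + v j + (u (j + ?N) + v (j + ?N))) / 2) = (\<lambda>j. (u j + u (j + ?N))/2 + (v j + v (j + ?N))/2)"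
    by (simp add: fun_eq_iff field_simps)
  have e2: "(\<lambda>j. (u j + v j - (u (j + ?N) + v (j + ?N))) / 2) = (\<lambda>j. (u j - u (j + ?N))/2 + (v j - v (j + ?N))/2)"
    by (simp add: fun_eq_iff field_simps)
  show ?case by (simp add: e1 e2 Suc.IH)
qed

lemma T_parseval: "(\<Sum>i<2^d*s. (T_map s d v i)^2) = (\<Sum>i<2^d*s. (v i)^2) / 2^d"
proof (induction d arbitrary: v)
  case 0 then show ?case by simp
next
  case (Suc d)
  let ?N = "2^d*s"
  let ?a = "\<lambda>j. (v j + v (j + ?N))/2" and ?b = "\<lambda>j. (v j - v (j + ?N))/2"
  have "(\<Sum>i<2^Suc d*s. (T_map s (Suc d) v i)^2) = (\<Sum>i<?N. (T_map s (Suc d) v i)^2) + (\<Sum>i<?N. (T_map s (Suc d) v (i+?N))^2)"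
    using sum_split2[where N="?N" and f="\<lambda>i. (T_map s (Suc d) v i)^2"] by (simp only: power_Suc mult.assoc)
  also have "\<dots> = (\<Sum>i<?N. (T_map s d ?a i)^2) + (\<Sum>i<?N. (T_map s d ?b i)^2)"
    by simp
  also have "\<dots> = ((\<Sum>i<?N. (?a i)^2) + (\<Sum>i<?N. (?b i)^2)) / 2^d"
    by (simp only: Suc.IH add_divide_distrib)
  also have "\<dots> = (\<Sum>i<?N. (?a i)^2 + (?b i)^2) / 2^d"
    by (simp only: sum.distrib)
  also have "\<dots> = (\<Sum>i<?N. ((v i)^2 + (v (i+?N))^2)/2) / 2^d"
    by (rule arg_cong[where f="\<lambda>x. x/2^d"], rule sum.cong, simp, simp add: power2_eq_square field_simps)
  also have "\<dots> = ((\<Sum>i<?N. (v i)^2) + (\<Sum>i<?N. (v (i+?N))^2)) / 2^Suc d"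
    by (simp add: sum_divide_distrib[symmetric] sum.distrib)
  also have "\<dots> = (\<Sum>i<2^Suc d*s. (v i)^2) / 2^Suc d"
    using sum_split2[where N="?N" and f="\<lambda>i. (v i)^2"] by (simp only: power_Suc mult.assoc)
  finally show ?case .
qed



lemma T_had: "i < 2^d*s \<Longrightarrow>
  T_map s d (\<lambda>i. \<Sum>b<2^d. of_int (hadamard d (i div s) b) * c b (i mod s)) i = c (i div s) (i mod s)"
proof (induction d arbitrary: c i)
  case 0 then show ?case by simp
next
  case (Suc d)
  let ?N = "2^d*s"
  let ?v = "\<lambda>i. \<Sum>b<2^Suc d. of_int (hadamard (Suc d) (i div s) b) * c b (i mod s)"
  have spos: "s > 0" using Suc.prems by (cases s) auto
  have dm: "(j + ?N) div s = j div s + 2^d" "(j + ?N) mod s = j mod s" for j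
    using spos by simp_all
  have A: "?v j = (\<Sum>b<2^d. of_int (hadamard d (j div s) b) * (c b (j mod s) + c (b+2^d) (j mod s)))"
    if "j < ?N" for j
  proof -
    have q: "j div s < 2^d" using that spos by (simp add: div_less_iff_less_mult)
    have "?v j = (\<Sum>b<2^d. of_int (hadamard (Suc d) (j div s) b) * c b (j mod s))
       + (\<Sum>b<2^d. of_int (hadamard (Suc d) (j div s) (b+2^d)) * c (b+2^d) (j mod s))"
      using sum_split2[where N="2^d" and f="\<lambda>b. of_int (hadamard (Suc d) (j div s) b) * c b (j mod s)"]
      by (simp only: power_Suc)
    also have "\<dots> = (\<Sum>b<2^d. of_int (hadamard d (j div s) b) * c b (j mod s))
       + (\<Sum>b<2^d. of_int (hadamard d (j div s) b) * c (b+2^d) (j mod s))"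
      using q by simp
    finally show ?thesis by (simp add: sum.distrib distrib_left)
  qed
  have B: "?v (j+?N) = (\<Sum>b<2^d. of_int (hadamard d (j div s) b) * (c b (j mod s) - c (b+2^d) (j mod s)))"
    if "j < ?N" for j
  proof -
    have q: "j div s < 2^d" using that spos by (simp add: div_less_iff_less_mult)
    have "?v (j+?N) = (\<Sum>b<2^d. of_int (hadamard (Suc d) (j div s + 2^d) b) * c b (j mod s))
       + (\<Sum>b<2^d. of_int (hadamard (Suc d) (j div s + 2^d) (b+2^d)) * c (b+2^d) (j mod s))"
      using sum_split2[where N="2^d" and f="\<lambda>b. of_int (hadamard (Suc d) (j div s + 2^d) b) * c b (j mod s)"]
      by (simp only: power_Suc dm)
    also have "\<dots> = (\<Sum>b<2^d. of_int (hadamard d (j div s) b) * c b (j mod s))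
       - (\<Sum>b<2^d. of_int (hadamard d (j div s) b) * c (b+2^d) (j mod s))"
      using q by (simp add: sum_negf)
    finally show ?thesis by (simp add: sum_subtractf right_diff_distrib)
  qed
  have avg: "\<forall>j<?N. (?v j + ?v (j+?N))/2 = (\<Sum>b<2^d. of_int (hadamard d (j div s) b) * c b (j mod s))"
  proof (intro allI impI)
    fix j assume j: "j < ?N"
    show "(?v j + ?v (j+?N))/2 = (\<Sum>b<2^d. of_int (hadamard d (j div s) b) * c b (j mod s))"
      unfolding A[OF j] B[OF j] by (simp add: sum.distrib[symmetric] sum_divide_distrib algebra_simps)
  qed
  have dif: "\<forall>j<?N. (?v j - ?v (j+?N))/2 = (\<Sum>b<2^d. of_int (hadamard d (j div s) b) * c (b+2^d) (j mod s))"
  proof (intro allI impI)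
    fix j assume j: "j < ?N"
    show "(?v j - ?v (j+?N))/2 = (\<Sum>b<2^d. of_int (hadamard d (j div s) b) * c (b+2^d) (j mod s))"
      unfolding A[OF j] B[OF j] by (simp add: sum_subtractf[symmetric] sum_divide_distrib algebra_simps)
  qed
  have NN: "2^Suc d*s = ?N + ?N" by simp
  show ?case
  proof (cases "i < ?N")
    case True
    have "T_map s (Suc d) ?v i = T_map s d (\<lambda>j. (?v j + ?v (j+?N))/2) i" using True by simp
    also have "\<dots> = T_map s d (\<lambda>j. \<Sum>b<2^d. of_int (hadamard d (j div s) b) * c b (j mod s)) i"
      by (rule T_cong[OF avg True])
    also have "\<dots> = c (i div s) (i mod s)" by (rule Suc.IH[OF True])
    finally show ?thesis .
  next
    case False
    have i': "i - ?N < ?N" using False Suc.prems unfolding NN by linarith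
    have "T_map s (Suc d) ?v i = T_map s d (\<lambda>j. (?v j - ?v (j+?N))/2) (i - ?N)" using False by simp
    also have "\<dots> = T_map s d (\<lambda>j. \<Sum>b<2^d. of_int (hadamard d (j div s) b) * c (b+2^d) (j mod s)) (i - ?N)"
      by (rule T_cong[OF dif i'])
    also have "\<dots> = c ((i - ?N) div s + 2^d) ((i - ?N) mod s)" by (rule Suc.IH[OF i'])
    also have "\<dots> = c (i div s) (i mod s)" using dm[of "i - ?N"] False by simp
    finally show ?thesis .
  qed
qed


theorem mainTheorem4:
  fixes d s m :: nat
    and M0 :: "nat \<Rightarrow> nat \<Rightarrow> int"
    and Q1 Q2 :: "nat \<Rightarrow> nat \<Rightarrow> real"
    and x n' y' y w xhat :: "nat \<Rightarrow> real"
    and wt :: "nat \<Rightarrow> int"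
  assumes hs: "s \<ge> 1" and hm: "m \<ge> 1"
    and hinj: "inj_on_binary s m M0"
    and hQ: "\<forall>i < 2^d * s. \<forall>j < 2^d * m.
               Q1 i j - Q2 i j = of_int (kron_hadamard d s m M0 i j)"
    and hx: "binary_vec (2^d * m) x"
    and hy': "y' = (\<lambda>i. mat_vec (\<lambda>a b. if a < 2^d * s then Q1 a b else Q2 (a - 2^d * s) b)
                        (2^d * m) x i + n' i)"
    and hy: "y = (\<lambda>i. y' i - y' (i + 2^d * s))"
    and hw: "w = T_map s d y"
    and hround: "\<forall>j < 2^d * s. \<forall>z::int. \<bar>w j - of_int (wt j)\<bar> \<le> \<bar>w j - of_int z\<bar>"
    and hxhat_bin: "binary_vec (2^d * m) xhat"
    and hdec: "\<forall>i < 2^d. \<forall>u. binary_vec m u \<longrightarrow>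
                 (\<forall>r<s. of_int (wt (i * s + r)) = int_mat_vec M0 m u r) \<longrightarrow>
                 (\<forall>k<m. xhat (i * m + k) = u k)"
  shows "real (card {i. i < 2^d \<and> (\<exists>k<m. xhat (i * m + k) \<noteq> x (i * m + k))})
           \<le> 4 / 2^d * sqnorm (2^d * s)
                (\<lambda>i. y i - mat_vec (\<lambda>a b. of_int (kron_hadamard d s m M0 a b)) (2^d * m) x i)
       \<and> 4 / 2^d * sqnorm (2^d * s)
                (\<lambda>i. y i - mat_vec (\<lambda>a b. of_int (kron_hadamard d s m M0 a b)) (2^d * m) x i)
           \<le> 8 / 2^d * sqnorm (2^(d+1) * s) n'
       \<and> real (card {j. j < 2^d * m \<and> xhat j \<noteq> x j}) \<le> 8 * m / 2^d * sqnorm (2^(d+1) * s) n'"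
proof -
  define N where "N = 2^d * s"
  define P where "P = (\<lambda>i. mat_vec (\<lambda>a b. of_int (kron_hadamard d s m M0 a b)) (2^d * m) x i)"
  define e where "e = (\<lambda>i. n' i - n' (i + N))"
  define c where "c = (\<lambda>b r. int_mat_vec M0 m (\<lambda>k. x (b*m+k)) r)"
  define B where "B = {i. i < 2^d \<and> (\<exists>k<m. xhat (i * m + k) \<noteq> x (i * m + k))}"
  define Y where "Y = sqnorm (2^(d+1) * s) n'"
  have ye: "y i = P i + e i" if "i < N" for i
  proof -
    have "y i = (\<Sum>j<2^d*m. Q1 i j * x j) + n' i - ((\<Sum>j<2^d*m. Q2 i j * x j) + n' (i + N))"
      using that unfolding hy hy' mat_vec_def N_def by simp
    also have "\<dots> = (\<Sum>j<2^d*m. (Q1 i j - Q2 i j) * x j) + e i"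
      unfolding e_def by (simp add: sum_subtractf left_diff_distrib)
    also have "(\<Sum>j<2^d*m. (Q1 i j - Q2 i j) * x j) = P i"
      unfolding P_def mat_vec_def using hQ that unfolding N_def by (intro sum.cong) auto
    finally show ?thesis .
  qed
  have Pc: "P i = (\<Sum>b<2^d. of_int (hadamard d (i div s) b) * c b (i mod s))" for i
  proof -
    have "P i = (\<Sum>b<2^d. \<Sum>k<m. of_int (kron_hadamard d s m M0 i (b*m+k)) * x (b*m+k))"
      unfolding P_def mat_vec_def by (rule sum_group)
    also have "\<dots> = (\<Sum>b<2^d. \<Sum>k<m. of_int (hadamard d (i div s) b) * (of_int (M0 (i mod s) k) * x (b*m+k)))"
      using hm by (intro sum.cong refl) (simp add: kron_hadamard_def)
    also have "\<dots> = (\<Sum>b<2^d. of_int (hadamard d (i div s) b) * c b (i mod s))"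
      unfolding c_def int_mat_vec_def by (simp add: sum_distrib_left)
    finally show ?thesis .
  qed
  have wsplit: "w j = c (j div s) (j mod s) + T_map s d e j" if j: "j < N" for j
  proof -
    have "w j = T_map s d (\<lambda>i. P i + e i) j"
      unfolding hw using ye j unfolding N_def by (intro T_cong) auto
    also have "\<dots> = T_map s d P j + T_map s d e j" by (rule T_add)
    also have "T_map s d P j = c (j div s) (j mod s)"
      unfolding Pc using j unfolding N_def by (rule T_had)
    finally show ?thesis .
  qed
  have parse: "(\<Sum>j<N. (T_map s d e j)^2) = sqnorm N e / 2^d"
    unfolding N_def sqnorm_def by (rule T_parseval)
  have sq_eq: "sqnorm N (\<lambda>i. y i - P i) = sqnorm N e"
    unfolding sqnorm_def using ye by (intro sum.cong) auto
  have bad: "\<exists>r<s. 1/4 \<le> (T_map s d e (i*s+r))^2" if iB: "i \<in> B" for i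
  proof -
    from iB have i: "i < 2^d" and ex: "\<exists>k<m. xhat (i * m + k) \<noteq> x (i * m + k)" unfolding B_def by auto
    have ub: "binary_vec m (\<lambda>k. x (i*m+k))"
      unfolding binary_vec_def
    proof (intro allI impI)
      fix k assume "k < m"
      hence "i*m+k < (i+1)*m" by simp
      also have "\<dots> \<le> 2^d*m" using i by (intro mult_right_mono) auto
      finally have "i*m+k < 2^d*m" .
      thus "x (i*m+k) = 0 \<or> x (i*m+k) = 1" using hx unfolding binary_vec_def by blast
    qed
    have "\<not> (\<forall>r<s. of_int (wt (i * s + r)) = c i r)"
    proof
      assume asm: "\<forall>r<s. of_int (wt (i * s + r)) = c i r"
      have H: "\<forall>u. binary_vec m u \<longrightarrow> (\<forall>r<s. of_int (wt (i * s + r)) = int_mat_vec M0 m u r) \<longrightarrow> (\<forall>k<m. xhat (i * m + k) = u k)"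
        using mp[OF spec[OF hdec, of i] i] .
      have A': "\<forall>r<s. of_int (wt (i*s+r)) = int_mat_vec M0 m (\<lambda>k. x(i*m+k)) r" using asm unfolding c_def .
      have "\<forall>k<m. xhat (i * m + k) = (\<lambda>k. x (i*m+k)) k" using mp[OF mp[OF spec[OF H, of "\<lambda>k. x (i*m+k)"] ub] A'] .
      hence "\<forall>k<m. xhat (i * m + k) = x (i*m+k)" by simp
      with ex show False by blast
    qed
    then obtain r where r: "r < s" and ne: "of_int (wt (i * s + r)) \<noteq> c i r" by blast
    have "c i r \<in> \<int>"
      unfolding c_def int_mat_vec_def
    proof (intro Ints_sum)
      fix k assume "k \<in> {..<m}"
      hence "x (i*m+k) = 0 \<or> x (i*m+k) = 1" using ub unfolding binary_vec_def by simp
      thus "of_int (M0 r k) * x (i*m+k) \<in> \<int>" by auto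
    qed
    then obtain z where z: "c i r = of_int z" by (auto elim: Ints_cases)
    define j where "j = i*s+r"
    have "i*s+r < (i+1)*s" using r by simp
    also have "\<dots> \<le> 2^d*s" using i by (intro mult_right_mono) auto
    finally have jN: "j < N" unfolding j_def N_def .
    have jd: "j div s = i" "j mod s = r" unfolding j_def using r by auto
    have wj: "w j = of_int z + T_map s d e j" using wsplit[OF jN] jd z by simp
    have r1: "\<bar>w j - of_int (wt j)\<bar> \<le> \<bar>w j - of_int z\<bar>" using hround jN unfolding N_def by blast
    have "wt j \<noteq> z" using ne z unfolding j_def by auto
    hence "(1::int) \<le> \<bar>wt j - z\<bar>" by linarith
    hence "1 \<le> \<bar>of_int (wt j) - (of_int z::real)\<bar>"
      by (metis of_int_1_le_iff of_int_abs of_int_diff)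
    hence "1/2 \<le> \<bar>T_map s d e j\<bar>" using r1 wj by linarith
    hence "(1/2)^2 \<le> \<bar>T_map s d e j\<bar>^2" by (rule power_mono) simp
    hence "1/4 \<le> (T_map s d e j)^2" by (simp add: power2_eq_square)
    thus ?thesis using r unfolding j_def by blast
  qed
  have Bsub: "B \<subseteq> {..<2^d}" unfolding B_def by auto
  have finB: "finite B" using Bsub by (rule finite_subset) simp
  have cardB: "real (card B) \<le> 4 / 2^d * sqnorm N e"
  proof -
    have "real (card B) / 4 = (\<Sum>i\<in>B. 1/4)" by simp
    also have "\<dots> \<le> (\<Sum>i\<in>B. \<Sum>r<s. (T_map s d e (i*s+r))^2)"
    proof (rule sum_mono)
      fix i assume "i \<in> B"
      then obtain r where r: "r < s" "1/4 \<le> (T_map s d e (i*s+r))^2" using bad by blast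
      have "(T_map s d e (i*s+r))^2 \<le> (\<Sum>r<s. (T_map s d e (i*s+r))^2)"
        by (rule member_le_sum) (use r in auto)
      thus "1/4 \<le> (\<Sum>r<s. (T_map s d e (i*s+r))^2)" using r by linarith
    qed
    also have "\<dots> \<le> (\<Sum>i<2^d. \<Sum>r<s. (T_map s d e (i*s+r))^2)"
      by (rule sum_mono2) (use Bsub in \<open>auto intro: sum_nonneg\<close>)
    also have "\<dots> = (\<Sum>j<N. (T_map s d e j)^2)"
      unfolding N_def by (rule sum_group[symmetric])
    also have "\<dots> = sqnorm N e / 2^d" by (rule parse)
    finally show ?thesis by (simp add: field_simps)
  qed
  have eY: "sqnorm N e \<le> 2 * Y"
  proof -
    have "Y = (\<Sum>i<N. (n' i)^2) + (\<Sum>i<N. (n' (i+N))^2)"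
      unfolding Y_def sqnorm_def using sum_split2[where N=N and f="\<lambda>i. (n' i)^2"]
      unfolding N_def by (simp add: mult.assoc)
    moreover have "sqnorm N e \<le> (\<Sum>i<N. 2 * ((n' i)^2 + (n' (i+N))^2))"
      unfolding sqnorm_def e_def
    proof (rule sum_mono)
      fix i
      have "0 \<le> (n' i + n' (i+N))^2" by simp
      thus "(n' i - n' (i + N))^2 \<le> 2 * ((n' i)^2 + (n' (i+N))^2)"
        by (simp add: power2_eq_square algebra_simps)
    qed
    ultimately show ?thesis by (simp add: sum_distrib_left sum.distrib)
  qed
  have second: "4 / 2^d * sqnorm N e \<le> 8 / 2^d * Y"
  proof -
    have "4 / 2^d * sqnorm N e \<le> 4 / 2^d * (2 * Y)" by (rule mult_left_mono[OF eY]) simp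
    thus ?thesis by simp
  qed
  have third: "card {j. j < 2^d * m \<and> xhat j \<noteq> x j} \<le> m * card B"
  proof -
    have "{j. j < 2^d * m \<and> xhat j \<noteq> x j} \<subseteq> (\<Union>i\<in>B. (\<lambda>k. i*m+k) ` {..<m})"
    proof
      fix j assume "j \<in> {j. j < 2^d * m \<and> xhat j \<noteq> x j}"
      hence j: "j < 2^d*m" "xhat j \<noteq> x j" by auto
      define i where "i = j div m"
      define k where "k = j mod m"
      have jk: "j = i*m+k" unfolding i_def k_def by simp
      have k: "k < m" unfolding k_def using hm by simp
      have i: "i < 2^d" unfolding i_def using j(1) by (simp add: less_mult_imp_div_less)
      have "i \<in> B" unfolding B_def using i k j(2) jk by auto
      thus "j \<in> (\<Union>i\<in>B. (\<lambda>k. i*m+k) ` {..<m})" using jk k by auto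
    qed
    hence "card {j. j < 2^d * m \<and> xhat j \<noteq> x j} \<le> card (\<Union>i\<in>B. (\<lambda>k. i*m+k) ` {..<m})"
      by (intro card_mono) (use finB in auto)
    also have "\<dots> \<le> (\<Sum>i\<in>B. card ((\<lambda>k. i*m+k) ` {..<m}))" by (rule card_UN_le) (use finB in auto)
    also have "\<dots> \<le> (\<Sum>i\<in>B. m)" by (intro sum_mono) (metis card_image_le card_lessThan finite_lessThan)
    finally show ?thesis by (simp add: mult.commute)
  qed
  have c1: "real (card B) \<le> 4 / 2^d * sqnorm N (\<lambda>i. y i - P i)" using cardB sq_eq by simp
  have c3: "real (card {j. j < 2^d * m \<and> xhat j \<noteq> x j}) \<le> 8 * m / 2^d * Y"
  proof -
    have "real (card {j. j < 2^d * m \<and> xhat j \<noteq> x j}) \<le> real m * real (card B)"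
      using third by (metis of_nat_le_iff of_nat_mult)
    also have "\<dots> \<le> real m * (8 / 2^d * Y)"
      by (rule mult_left_mono) (use cardB second in auto)
    finally show ?thesis by (simp add: mult_ac)
  qed
  show ?thesis
    using c1 second sq_eq c3 unfolding B_def[symmetric] P_def[symmetric] N_def[symmetric] Y_def[symmetric]
    by simp
qed
end
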